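(* Let $E\to M$ be a holomorphic Lie algebroid with $m=n=\operatorname{rank}\rho$, so that the anchor matrix $(\rho^k_\alpha(z))$ is invertible with inverse $(\rho^\alpha_k(z))$. Let $(T'M,L)$ be a complex Lagrange space, with metric tensor $g_{i\bar j}=\frac{\partial^2 L}{\partial\eta^i\partial\bar\eta^j}$ and Chern–Lagrange nonlinear connection $N^i_k=g^{\bar j i}\frac{\partial^2L}{\partial z^k\partial\bar\eta^j}$. Put $L^*(z,u)=L(z,\eta(u))$ with $\eta^k=\rho^k_\alpha(z)u^\alpha$, $g_{\alpha\bar\beta}=\frac{\partial^2L^*}{\partial u^\alpha\partial\bar u^\beta}=\rho^i_\alpha\overline{\rho^j_\beta}\,g_{i\bar j}$, with inverse $g^{\bar\beta\alpha}$. Then the nonlinear connection induced on $E$ by $N^h_k$, \[ \overset{*}{N}{}^\alpha_k(z,u)=\rho^\alpha_h N^h_k(z,\eta)-\frac{\partial\rho^\alpha_h}{\partial z^k}\eta^h,\qquad \eta^h=\rho^h_\beta u^\beta, \] is given by \[ \overset{*}{N}{}^\alpha_k=g^{\bar\beta\alpha}\frac{\partial^2 L^*}{\partial z^k\partial\bar u^\beta}. \]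
   Context: $M$ is a complex $n$-manifold with local coordinates $(z^k)$; $T'M$ has induced coordinates $(z^k,\eta^k)$. $E\to M$ is a holomorphic Lie algebroid of rank $m$ with local coordinates $(z^k,u^\alpha)$ and anchor $\rho(e_\alpha)=\rho^k_\alpha(z)\partial_{z^k}$ with $\rho^k_\alpha$ holomorphic. A complex Lagrange space $(T'M,L)$ is given by a real function $L(z,\eta)$ on $T'M$ whose metric tensor $g_{i\bar j}=\partial^2L/\partial\eta^i\partial\bar\eta^j$ is nondegenerate; $g^{\bar j i}$ denotes the inverse, $g^{\bar j i}g_{k\bar j}=\delta^i_k$, and similarly $g^{\bar\beta\alpha}g_{\gamma\bar\beta}=\delta^\alpha_\gamma$. *)

theory Defs
  imports "HOL-Analysis.Analysis"
begin

text \<open>Local coordinate setting: a chart domain U of M (open in complex^'n), fibre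
coordinates eta of T'M and u of E (rank m = n, so the same finite index type 'n).
Matrices are indexed as (A $ row $ column): (rho z) $ k $ alpha = rho^k_alpha(z).\<close>

definition wirt :: "(complex^'n \<Rightarrow> complex) \<Rightarrow> complex^'n \<Rightarrow> 'n \<Rightarrow> complex" where
  "wirt f w i = (frechet_derivative f (at w) (axis i 1)
                 - \<i> * frechet_derivative f (at w) (axis i \<i>)) / 2"

definition wirtc :: "(complex^'n \<Rightarrow> complex) \<Rightarrow> complex^'n \<Rightarrow> 'n \<Rightarrow> complex" where
  "wirtc f w i = (frechet_derivative f (at w) (axis i 1)
                 + \<i> * frechet_derivative f (at w) (axis i \<i>)) / 2"

definition d_z :: "(complex^'n \<Rightarrow> complex^'n \<Rightarrow> complex) \<Rightarrow> complex^'n \<Rightarrow> complex^'n \<Rightarrow> 'n \<Rightarrow> complex" where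
  "d_z F z y k = wirt (\<lambda>z'. F z' y) z k"

definition d_y :: "(complex^'n \<Rightarrow> complex^'n \<Rightarrow> complex) \<Rightarrow> complex^'n \<Rightarrow> complex^'n \<Rightarrow> 'n \<Rightarrow> complex" where
  "d_y F z y i = wirt (\<lambda>y'. F z y') y i"

definition d_ybar :: "(complex^'n \<Rightarrow> complex^'n \<Rightarrow> complex) \<Rightarrow> complex^'n \<Rightarrow> complex^'n \<Rightarrow> 'n \<Rightarrow> complex" where
  "d_ybar F z y j = wirtc (\<lambda>y'. F z y') y j"

definition holo_on :: "(complex^'n) set \<Rightarrow> (complex^'n \<Rightarrow> complex) \<Rightarrow> bool" where
  "holo_on U f \<longleftrightarrow> (\<forall>z\<in>U. \<exists>D. (f has_derivative D) (at z) \<and> (\<forall>c x. D (c *s x) = c * D x))"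

definition C2_on :: "'a::real_normed_vector set \<Rightarrow> ('a \<Rightarrow> 'b::real_normed_vector) \<Rightarrow> bool" where
  "C2_on S f \<longleftrightarrow> open S \<and> f differentiable_on S \<and>
     (\<forall>v. (\<lambda>p. frechet_derivative f (at p) v) differentiable_on S) \<and>
     (\<forall>v w. continuous_on S (\<lambda>p. frechet_derivative (\<lambda>q. frechet_derivative f (at q) v) (at p) w))"

definition Lc :: "(complex^'n \<Rightarrow> complex^'n \<Rightarrow> real) \<Rightarrow> complex^'n \<Rightarrow> complex^'n \<Rightarrow> complex" where
  "Lc L z y = complex_of_real (L z y)"

definition metric :: "(complex^'n \<Rightarrow> complex^'n \<Rightarrow> real) \<Rightarrow> complex^'n \<Rightarrow> complex^'n \<Rightarrow> complex^'n^'n" where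
  "metric L z y = (\<chi> i j. d_y (\<lambda>z' y'. d_ybar (Lc L) z' y' j) z y i)"

text \<open>Inverse metric: (metric_inv L z eta) $ j $ i = g^{conj j i}, so that
  sum_j g^{conj j i} g_{k conj j} = delta^i_k.\<close>
definition metric_inv :: "(complex^'n \<Rightarrow> complex^'n \<Rightarrow> real) \<Rightarrow> complex^'n \<Rightarrow> complex^'n \<Rightarrow> complex^'n^'n" where
  "metric_inv L z y = matrix_inv (metric L z y)"

definition CL_conn :: "(complex^'n \<Rightarrow> complex^'n \<Rightarrow> real) \<Rightarrow> complex^'n \<Rightarrow> complex^'n \<Rightarrow> 'n \<Rightarrow> 'n \<Rightarrow> complex" where
  "CL_conn L z y i k = (\<Sum>j\<in>UNIV. metric_inv L z y $ j $ i * d_z (\<lambda>z' y'. d_ybar (Lc L) z' y' j) z y k)"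

definition Lstar :: "(complex^'n \<Rightarrow> complex^'n^'n) \<Rightarrow> (complex^'n \<Rightarrow> complex^'n \<Rightarrow> real) \<Rightarrow> complex^'n \<Rightarrow> complex^'n \<Rightarrow> real" where
  "Lstar \<rho> L z u = L z (\<rho> z *v u)"

definition induced_conn :: "(complex^'n \<Rightarrow> complex^'n^'n) \<Rightarrow> (complex^'n \<Rightarrow> complex^'n \<Rightarrow> real) \<Rightarrow> complex^'n \<Rightarrow> complex^'n \<Rightarrow> 'n \<Rightarrow> 'n \<Rightarrow> complex" where
  "induced_conn \<rho> L z u \<alpha> k =
     (let \<eta> = \<rho> z *v u in
      (\<Sum>h\<in>UNIV. matrix_inv (\<rho> z) $ \<alpha> $ h * CL_conn L z \<eta> h k)
      - (\<Sum>h\<in>UNIV. wirt (\<lambda>z'. matrix_inv (\<rho> z') $ \<alpha> $ h) z k * \<eta> $ h))"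

end

theory Submission imports Defs begin
definition wd :: "(complex^'n \<Rightarrow> complex) \<Rightarrow> 'n \<Rightarrow> complex" where
  "wd D k = (D (axis k 1) - \<i> * D (axis k \<i>)) / 2"
definition wc :: "(complex^'n \<Rightarrow> complex) \<Rightarrow> 'n \<Rightarrow> complex" where
  "wc D k = (D (axis k 1) + \<i> * D (axis k \<i>)) / 2"

lemma vec_decomp: "(w::complex^'n) = (\<Sum>h\<in>UNIV. Re (w$h) *\<^sub>R axis h 1 + Im (w$h) *\<^sub>R axis h \<i>)"
  by (simp add: vec_eq_iff axis_def complex_eq_iff if_distrib sum.If_cases cong del: if_weak_cong)

lemma aux_re_im: "Re c *\<^sub>R X + Im c *\<^sub>R Y = (X - \<i> * Y) / 2 * c + (X + \<i> * Y) / 2 * cnj (c::complex)"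
  by (cases c) (simp add: Complex_eq scaleR_conv_of_real field_simps)

lemma W:
  assumes "linear D"
  shows "D w = (\<Sum>h\<in>UNIV. wd D h * w$h + wc D h * cnj (w$h))"
proof -
  have "D w = (\<Sum>h\<in>UNIV. Re (w$h) *\<^sub>R D (axis h 1) + Im (w$h) *\<^sub>R D (axis h \<i>))"
    by (subst vec_decomp, simp add: linear_sum[OF assms] linear_add[OF assms] linear_scale[OF assms])
  also have "\<dots> = (\<Sum>h\<in>UNIV. wd D h * w$h + wc D h * cnj (w$h))"
    apply (rule sum.cong, simp)
    by (simp add: wd_def wc_def aux_re_im)
  finally show ?thesis .
qed

lemma W1:
  assumes "linear D"
  shows "(D c - \<i> * D (\<i> *s c)) / 2 = (\<Sum>h\<in>UNIV. wd D h * c$h)"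
proof -
  have "D c - \<i> * D (\<i> *s c) = (\<Sum>h\<in>UNIV. 2 * (wd D h * c$h))"
    unfolding W[OF assms, of c] W[OF assms, of "\<i> *s c"] sum_distrib_left sum_subtractf[symmetric]
    by (rule sum.cong) (simp_all add: algebra_simps)
  then show ?thesis by (simp add: sum_distrib_left[symmetric])
qed

lemma W2:
  assumes "linear D"
  shows "(D c + \<i> * D (\<i> *s c)) / 2 = (\<Sum>h\<in>UNIV. wc D h * cnj (c$h))"
proof -
  have "D c + \<i> * D (\<i> *s c) = (\<Sum>h\<in>UNIV. 2 * (wc D h * cnj (c$h)))"
    unfolding W[OF assms, of c] W[OF assms, of "\<i> *s c"] sum_distrib_left sum.distrib[symmetric]
    by (rule sum.cong) (simp_all add: algebra_simps)
  then show ?thesis by (simp add: sum_distrib_left[symmetric])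
qed

lemma mv_smult: "(A::complex^'n^'m) *v (c *s x) = c *s (A *v x)"
  by (simp add: vec_eq_iff matrix_vector_mult_def sum_distrib_left algebra_simps)

lemma mv_axis: "((A::complex^'n^'m) *v axis k 1) $ h = A $ h $ k"
  by (simp add: matrix_vector_mult_def axis_def if_distrib sum.If_cases cong del: if_weak_cong)

lemma axis_i: "axis k (\<i>::complex) = \<i> *s axis k 1"
  by (simp add: vec_eq_iff axis_def)

lemma wirt_eq: "(f has_derivative D) (at w) \<Longrightarrow> wirt f w k = wd D k"
  by (simp add: wirt_def wd_def frechet_derivative_at[symmetric])

lemma wirtc_eq: "(f has_derivative D) (at w) \<Longrightarrow> wirtc f w k = wc D k"
  by (simp add: wirtc_def wc_def frechet_derivative_at[symmetric])

lemma has_derivative_vecI: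
  fixes f :: "'a::real_normed_vector \<Rightarrow> complex^'n"
  assumes "\<And>i. ((\<lambda>x. f x $ i) has_derivative (\<lambda>h. f' h $ i)) (at a)"
  shows "(f has_derivative f') (at a)"
proof -
  have "\<forall>b\<in>Basis. ((\<lambda>x. f x \<bullet> b) has_derivative (\<lambda>h. f' h \<bullet> b)) (at a within UNIV)"
  proof
    fix b :: "complex^'n" assume "b \<in> Basis"
    then obtain i u where b: "b = axis i u" by (auto simp: Basis_vec_def)
    show "((\<lambda>x. f x \<bullet> b) has_derivative (\<lambda>h. f' h \<bullet> b)) (at a within UNIV)"
      unfolding b inner_axis using has_derivative_inner_left[OF assms[of i]] by simp
  qed
  then show ?thesis by (subst has_derivative_componentwise_within)
qed

lemma has_derivative_mv:
  "((\<lambda>w. (A::complex^'n^'m) *v w) has_derivative (\<lambda>w. A *v w)) (at a)"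
  apply (rule has_derivative_vecI)
  unfolding matrix_vector_mult_def vec_lambda_beta
  apply (rule has_derivative_sum)
  apply (rule has_derivative_mult_right)
  apply (rule bounded_linear.has_derivative[OF bounded_linear_vec_nth has_derivative_ident])
  done

lemma differentiable_of_real:
  "f differentiable F \<Longrightarrow> (\<lambda>x. (of_real (f x) :: complex)) differentiable F"
  unfolding differentiable_def using has_derivative_of_real by blast

lemma differentiable_prod':
  fixes f :: "'i \<Rightarrow> 'a::real_normed_vector \<Rightarrow> 'b::real_normed_field"
  shows "(\<And>i. i \<in> I \<Longrightarrow> f i differentiable (at x)) \<Longrightarrow> (\<lambda>x. \<Prod>i\<in>I. f i x) differentiable (at x)"
proof -
  assume a: "\<And>i. i \<in> I \<Longrightarrow> f i differentiable (at x)"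
  then have "\<forall>i\<in>I. \<exists>D. (f i has_derivative D) (at x)" by (auto simp: differentiable_def)
  then obtain D where "\<forall>i\<in>I. (f i has_derivative D i) (at x)" by metis
  then have "((\<lambda>x. \<Prod>i\<in>I. f i x) has_derivative (\<lambda>y. \<Sum>i\<in>I. D i y * (\<Prod>j\<in>I - {i}. f j x))) (at x)"
    by (intro has_derivative_prod) auto
  then show ?thesis unfolding differentiable_def by blast
qed

lemma differentiable_det:
  fixes M :: "'a::real_normed_vector \<Rightarrow> complex^'n^'n"
  assumes "\<And>i j. (\<lambda>x. M x $ i $ j) differentiable (at a)"
  shows "(\<lambda>x. det (M x)) differentiable (at a)"
proof -
  have "(\<lambda>x. of_int (sign p) * (\<Prod>i\<in>UNIV. M x $ i $ p i)) differentiable (at a)" for p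
  proof -
    have "(\<lambda>x. \<Prod>i\<in>UNIV. M x $ i $ p i) differentiable (at a)"
      by (rule differentiable_prod'[of UNIV "\<lambda>i x. M x $ i $ p i"]) (rule assms)
    then show ?thesis by (intro differentiable_mult differentiable_const)
  qed
  then show ?thesis unfolding det_def
    by (intro differentiable_sum) (auto simp: finite_permutations)
qed
definition DL :: "(complex^'n \<Rightarrow> complex^'n \<Rightarrow> real) \<Rightarrow> (complex^'n) \<times> (complex^'n) \<Rightarrow> (complex^'n) \<times> (complex^'n) \<Rightarrow> real" where
  "DL L p = frechet_derivative (\<lambda>q. L (fst q) (snd q)) (at p)"

definition Lb :: "(complex^'n \<Rightarrow> complex^'n \<Rightarrow> real) \<Rightarrow> 'n \<Rightarrow> (complex^'n) \<times> (complex^'n) \<Rightarrow> complex" where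
  "Lb L j p = (of_real (DL L p (0, axis j 1)) + \<i> * of_real (DL L p (0, axis j \<i>))) / 2"

definition DLb :: "(complex^'n \<Rightarrow> complex^'n \<Rightarrow> real) \<Rightarrow> 'n \<Rightarrow> (complex^'n) \<times> (complex^'n) \<Rightarrow> (complex^'n) \<times> (complex^'n) \<Rightarrow> complex" where
  "DLb L j p = frechet_derivative (Lb L j) (at p)"

lemma L_der:
  fixes L :: "complex^'n \<Rightarrow> complex^'n \<Rightarrow> real"
  assumes "C2_on (U \<times> UNIV) (\<lambda>p. L (fst p) (snd p))" "z \<in> U"
  shows "((\<lambda>p. L (fst p) (snd p)) has_derivative DL L (z,y)) (at (z,y))"
proof -
  have o: "open (U \<times> (UNIV :: (complex^'n) set))" using assms(1) unfolding C2_on_def by blast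
  have zy: "(z,y) \<in> U \<times> UNIV" using assms(2) by simp
  have "(\<lambda>p. L (fst p) (snd p)) differentiable (at (z,y) within U \<times> UNIV)"
    using assms(1) zy unfolding C2_on_def differentiable_on_def by blast
  then have "(\<lambda>p. L (fst p) (snd p)) differentiable (at (z,y))"
    using at_within_open[OF zy o] by simp
  then show ?thesis unfolding DL_def by (rule frechet_derivative_works[THEN iffD1])
qed

lemma Lb_der:
  fixes L :: "complex^'n \<Rightarrow> complex^'n \<Rightarrow> real"
  assumes "C2_on (U \<times> UNIV) (\<lambda>p. L (fst p) (snd p))" "z \<in> U"
  shows "(Lb L j has_derivative DLb L j (z,y)) (at (z,y))"
proof -
  have o: "open (U \<times> (UNIV :: (complex^'n) set))" using assms(1) unfolding C2_on_def by blast
  have zy: "(z,y) \<in> U \<times> UNIV" using assms(2) by simp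
  have d: "(\<lambda>p. DL L p v) differentiable (at (z,y))" for v
  proof -
    have "(\<lambda>p. DL L p v) differentiable (at (z,y) within U \<times> UNIV)"
      using assms(1) zy unfolding C2_on_def differentiable_on_def DL_def by blast
    then show ?thesis using at_within_open[OF zy o] by simp
  qed
  have "Lb L j differentiable (at (z,y))"
    unfolding Lb_def[abs_def]
    apply (rule differentiable_divide)
      apply (rule differentiable_add)
       apply (rule differentiable_of_real[OF d])
      apply (rule differentiable_mult[OF differentiable_const differentiable_of_real[OF d]])
     apply (rule differentiable_const)
    by simp
  then show ?thesis unfolding DLb_def by (rule frechet_derivative_works[THEN iffD1])
qed

lemma DL_linear: "(f has_derivative D) F \<Longrightarrow> linear D"
  using has_derivative_bounded_linear bounded_linear.linear by blast

lemma F1: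
  fixes L :: "complex^'n \<Rightarrow> complex^'n \<Rightarrow> real"
  assumes "C2_on (U \<times> UNIV) (\<lambda>p. L (fst p) (snd p))" "z \<in> U"
  shows "d_ybar (Lc L) z y j = Lb L j (z, y)"
proof -
  have "((\<lambda>y'. Lc L z y') has_derivative (\<lambda>w. of_real (DL L (z,y) (0,w)))) (at y)"
    unfolding Lc_def
    apply (rule has_derivative_of_real)
    using has_derivative_compose[OF has_derivative_Pair[OF has_derivative_const has_derivative_ident] L_der[OF assms, of y]]
    by simp
  then show ?thesis unfolding d_ybar_def by (simp add: wirtc_eq wc_def Lb_def)
qed

lemma F2:
  fixes L :: "complex^'n \<Rightarrow> complex^'n \<Rightarrow> real"
  assumes "C2_on (U \<times> UNIV) (\<lambda>p. L (fst p) (snd p))" "z \<in> U"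
  shows "metric L z y $ i $ j = wd (\<lambda>w. DLb L j (z,y) (0,w)) i"
proof -
  have "((\<lambda>y'. Lb L j (z, y')) has_derivative (\<lambda>w. DLb L j (z,y) (0,w))) (at y)"
    using has_derivative_compose[OF has_derivative_Pair[OF has_derivative_const has_derivative_ident] Lb_der[OF assms, of j y]]
    by simp
  then show ?thesis unfolding metric_def d_y_def by (simp add: F1[OF assms] wirt_eq)
qed

lemma F3:
  fixes L :: "complex^'n \<Rightarrow> complex^'n \<Rightarrow> real"
  assumes "C2_on (U \<times> UNIV) (\<lambda>p. L (fst p) (snd p))" "z \<in> U" "open U"
  shows "d_z (\<lambda>z' y'. d_ybar (Lc L) z' y' j) z y k = wd (\<lambda>v. DLb L j (z,y) (v,0)) k"
proof -
  have "((\<lambda>z'. Lb L j (z', y)) has_derivative (\<lambda>v. DLb L j (z,y) (v,0))) (at z)"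
    using has_derivative_compose[OF has_derivative_Pair[OF has_derivative_ident has_derivative_const] Lb_der[OF assms(1,2), of j y]]
    by simp
  then have "((\<lambda>z'. d_ybar (Lc L) z' y j) has_derivative (\<lambda>v. DLb L j (z,y) (v,0))) (at z)"
    by (rule has_derivative_transform_within_open[OF _ assms(3,2)]) (simp add: F1[OF assms(1)])
  then show ?thesis unfolding d_z_def by (simp add: wirt_eq)
qed

lemma wd_sum: "wd (\<lambda>w. \<Sum>h\<in>I. F h w) k = (\<Sum>h\<in>I. wd (F h) k)"
  unfolding wd_def sum_divide_distrib[symmetric] sum_subtractf sum_distrib_left ..
lemma wd_add: "wd (\<lambda>w. F w + G w) k = wd F k + wd G k"
  by (simp add: wd_def algebra_simps add_divide_distrib diff_divide_distrib)
lemma wd_cmult: "wd (\<lambda>w. c * F w) k = c * wd F k"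
  by (simp add: wd_def algebra_simps)
lemma wd_multc: "wd (\<lambda>w. F w * c) k = wd F k * c"
  by (simp add: wd_def algebra_simps)
lemma wd_clinear: "(\<And>c x. D (c *s x) = c * D x) \<Longrightarrow> wd D k = D (axis k 1)"
  by (simp add: wd_def axis_i)
lemma wd_cnj_clinear: "(\<And>c x. D (c *s x) = c * D x) \<Longrightarrow> wd (\<lambda>v. cnj (D v)) k = 0"
  by (simp add: wd_def axis_i)

lemma wd_comp_mv:
  assumes "linear B"
  shows "wd (\<lambda>w. B ((A::complex^'n^'n) *v w)) k = (\<Sum>j\<in>UNIV. wd B j * A$j$k)"
proof -
  have "wd (\<lambda>w. B (A *v w)) k = (B (A *v axis k 1) - \<i> * B (\<i> *s (A *v axis k 1))) / 2"
    unfolding wd_def axis_i mv_smult ..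
  also have "\<dots> = (\<Sum>h\<in>UNIV. wd B h * (A *v axis k 1) $ h)" by (rule W1[OF assms])
  finally show ?thesis unfolding mv_axis .
qed

lemma wc_comp_mv:
  assumes "linear B"
  shows "wc (\<lambda>w. B ((A::complex^'n^'n) *v w)) k = (\<Sum>j\<in>UNIV. wc B j * cnj (A$j$k))"
proof -
  have "wc (\<lambda>w. B (A *v w)) k = (B (A *v axis k 1) + \<i> * B (\<i> *s (A *v axis k 1))) / 2"
    unfolding wc_def axis_i mv_smult ..
  also have "\<dots> = (\<Sum>h\<in>UNIV. wc B h * cnj ((A *v axis k 1) $ h))" by (rule W2[OF assms])
  finally show ?thesis unfolding mv_axis .
qed

lemma Lc_der:
  fixes L :: "complex^'n \<Rightarrow> complex^'n \<Rightarrow> real"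
  assumes "C2_on (U \<times> UNIV) (\<lambda>p. L (fst p) (snd p))" "z \<in> U"
  shows "((\<lambda>y'. complex_of_real (L z y')) has_derivative (\<lambda>w. of_real (DL L (z,y) (0,w)))) (at y)"
    apply (rule has_derivative_of_real)
    using has_derivative_compose[OF has_derivative_Pair[OF has_derivative_const has_derivative_ident] L_der[OF assms, of y]]
    by simp

lemma F4:
  fixes L :: "complex^'n \<Rightarrow> complex^'n \<Rightarrow> real"
  assumes "C2_on (U \<times> UNIV) (\<lambda>p. L (fst p) (snd p))" "z \<in> U"
  shows "d_ybar (Lc (Lstar \<rho> L)) z u \<beta> = (\<Sum>h\<in>UNIV. cnj (\<rho> z $ h $ \<beta>) * Lb L h (z, \<rho> z *v u))"
proof -
  let ?A = "\<lambda>w. complex_of_real (DL L (z, \<rho> z *v u) (0,w))"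
  have d: "((\<lambda>y'. complex_of_real (L z y')) has_derivative ?A) (at (\<rho> z *v u))"
    by (rule Lc_der[OF assms])
  have lin: "linear ?A" using DL_linear[OF d] .
  have "((\<lambda>u'. Lc (Lstar \<rho> L) z u') has_derivative (\<lambda>w. ?A (\<rho> z *v w))) (at u)"
    unfolding Lc_def Lstar_def
    using has_derivative_compose[OF has_derivative_mv d] by simp
  then have "d_ybar (Lc (Lstar \<rho> L)) z u \<beta> = wc (\<lambda>w. ?A (\<rho> z *v w)) \<beta>"
    unfolding d_ybar_def by (rule wirtc_eq)
  also have "\<dots> = (\<Sum>h\<in>UNIV. wc ?A h * cnj (\<rho> z $ h $ \<beta>))"
    by (rule wc_comp_mv[OF lin])
  finally show ?thesis by (simp add: wc_def Lb_def mult.commute)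
qed

lemma F5:
  fixes L :: "complex^'n \<Rightarrow> complex^'n \<Rightarrow> real"
  assumes "C2_on (U \<times> UNIV) (\<lambda>p. L (fst p) (snd p))" "z \<in> U"
  shows "metric (Lstar \<rho> L) z u $ \<alpha> $ \<beta> =
    (\<Sum>h\<in>UNIV. cnj (\<rho> z $ h $ \<beta>) * (\<Sum>j\<in>UNIV. metric L z (\<rho> z *v u) $ j $ h * \<rho> z $ j $ \<alpha>))"
proof -
  let ?p = "(z, \<rho> z *v u)"
  have dh: "((\<lambda>y'. Lb L h (z, \<rho> z *v y')) has_derivative (\<lambda>w. DLb L h ?p (0, \<rho> z *v w))) (at u)" for h
    using has_derivative_compose[OF has_derivative_Pair[OF has_derivative_const has_derivative_mv] Lb_der[OF assms, of h "\<rho> z *v u"]]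
    by simp
  have linh: "linear (\<lambda>w. DLb L h ?p (0, w))" for h
  proof -
    have "((\<lambda>y'. Lb L h (z, y')) has_derivative (\<lambda>w. DLb L h ?p (0, w))) (at (\<rho> z *v u))"
      using has_derivative_compose[OF has_derivative_Pair[OF has_derivative_const has_derivative_ident] Lb_der[OF assms, of h "\<rho> z *v u"]]
      by simp
    then show ?thesis by (rule DL_linear)
  qed
  have "((\<lambda>y'. \<Sum>h\<in>UNIV. cnj (\<rho> z $ h $ \<beta>) * Lb L h (z, \<rho> z *v y')) has_derivative
         (\<lambda>w. \<Sum>h\<in>UNIV. cnj (\<rho> z $ h $ \<beta>) * DLb L h ?p (0, \<rho> z *v w))) (at u)"
    by (intro has_derivative_sum has_derivative_mult_right dh)
  then have "metric (Lstar \<rho> L) z u $ \<alpha> $ \<beta> = wd (\<lambda>w. \<Sum>h\<in>UNIV. cnj (\<rho> z $ h $ \<beta>) * DLb L h ?p (0, \<rho> z *v w)) \<alpha>"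
    unfolding metric_def d_y_def vec_lambda_beta F4[OF assms] by (rule wirt_eq)
  also have "\<dots> = (\<Sum>h\<in>UNIV. cnj (\<rho> z $ h $ \<beta>) * (\<Sum>j\<in>UNIV. wd (\<lambda>w. DLb L h ?p (0, w)) j * \<rho> z $ j $ \<alpha>))"
    unfolding wd_sum wd_cmult wd_comp_mv[OF linh] ..
  finally show ?thesis by (simp add: F2[OF assms])
qed
lemma holo_der:
  assumes "holo_on U f" "z \<in> U"
  shows "(f has_derivative frechet_derivative f (at z)) (at z)"
    and "\<And>c x. frechet_derivative f (at z) (c *s x) = c * frechet_derivative f (at z) x"
proof -
  obtain D where D: "(f has_derivative D) (at z)" "\<forall>c x. D (c *s x) = c * D x"
    using assms unfolding holo_on_def by blast
  have e: "frechet_derivative f (at z) = D" using frechet_derivative_at[OF D(1)] by simp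
  show "(f has_derivative frechet_derivative f (at z)) (at z)" using D(1) e by simp
  show "\<And>c x. frechet_derivative f (at z) (c *s x) = c * frechet_derivative f (at z) x"
    using D(2) e by simp
qed

lemma F6:
  fixes L :: "complex^'n \<Rightarrow> complex^'n \<Rightarrow> real" and \<rho> :: "complex^'n \<Rightarrow> complex^'n^'n"
  assumes C2: "C2_on (U \<times> UNIV) (\<lambda>p. L (fst p) (snd p))" and oU: "open U" and zU: "z \<in> U"
    and holo: "\<And>k \<alpha>. holo_on U (\<lambda>z. \<rho> z $ k $ \<alpha>)"
  shows "d_z (\<lambda>z' u'. d_ybar (Lc (Lstar \<rho> L)) z' u' \<beta>) z u k =
    (\<Sum>h\<in>UNIV. cnj (\<rho> z $ h $ \<beta>) * (d_z (\<lambda>z' y'. d_ybar (Lc L) z' y' h) z (\<rho> z *v u) k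
       + (\<Sum>j\<in>UNIV. metric L z (\<rho> z *v u) $ j $ h * (\<Sum>\<gamma>\<in>UNIV. wirt (\<lambda>z'. \<rho> z' $ j $ \<gamma>) z k * u $ \<gamma>))))"
proof -
  let ?p = "(z, \<rho> z *v u)"
  define Dr where "Dr i j = frechet_derivative (\<lambda>z'. \<rho> z' $ i $ j) (at z)" for i j
  have dr: "((\<lambda>z'. \<rho> z' $ i $ j) has_derivative Dr i j) (at z)" for i j
    unfolding Dr_def by (rule holo_der(1)[OF holo zU])
  have cl: "Dr i j (c *s x) = c * Dr i j x" for i j c x
    unfolding Dr_def by (rule holo_der(2)[OF holo zU])
  define Wv where "Wv v = (\<chi> i. \<Sum>\<gamma>\<in>UNIV. Dr i \<gamma> v * u $ \<gamma>)" for v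
  have dW: "((\<lambda>z'. \<rho> z' *v u) has_derivative Wv) (at z)"
    apply (rule has_derivative_vecI)
    unfolding Wv_def matrix_vector_mult_def vec_lambda_beta
    apply (rule has_derivative_sum)
    apply (rule has_derivative_mult_left)
    by (rule dr)
  have Wcl: "Wv (c *s x) = c *s Wv x" for c x
    by (simp add: Wv_def cl vec_eq_iff sum_distrib_left algebra_simps)
  have dLb: "((\<lambda>z'. Lb L h (z', \<rho> z' *v u)) has_derivative (\<lambda>v. DLb L h ?p (v, Wv v))) (at z)" for h
    using has_derivative_compose[OF has_derivative_Pair[OF has_derivative_ident dW] Lb_der[OF C2 zU, of h "\<rho> z *v u"]]
    by simp
  have dg: "((\<lambda>z'. \<Sum>h\<in>UNIV. cnj (\<rho> z' $ h $ \<beta>) * Lb L h (z', \<rho> z' *v u)) has_derivative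
     (\<lambda>v. \<Sum>h\<in>UNIV. cnj (\<rho> z $ h $ \<beta>) * DLb L h ?p (v, Wv v) + cnj (Dr h \<beta> v) * Lb L h ?p)) (at z)"
    apply (rule has_derivative_sum)
    by (rule has_derivative_mult[OF has_derivative_cnj[OF dr] dLb])
  have dg': "((\<lambda>z'. d_ybar (Lc (Lstar \<rho> L)) z' u \<beta>) has_derivative
     (\<lambda>v. \<Sum>h\<in>UNIV. cnj (\<rho> z $ h $ \<beta>) * DLb L h ?p (v, Wv v) + cnj (Dr h \<beta> v) * Lb L h ?p)) (at z)"
    by (rule has_derivative_transform_within_open[OF dg oU zU]) (simp add: F4[OF C2])
  have linh: "linear (DLb L h ?p)" for h using DL_linear[OF Lb_der[OF C2 zU]] .
  have linB: "linear (\<lambda>w. DLb L h ?p (0, w))" for h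
  proof -
    have "((\<lambda>y'. Lb L h (z, y')) has_derivative (\<lambda>w. DLb L h ?p (0, w))) (at (\<rho> z *v u))"
      using has_derivative_compose[OF has_derivative_Pair[OF has_derivative_const has_derivative_ident] Lb_der[OF C2 zU, of h "\<rho> z *v u"]]
      by simp
    then show ?thesis by (rule DL_linear)
  qed
  have split: "DLb L h ?p (v, Wv v) = DLb L h ?p (v, 0) + DLb L h ?p (0, Wv v)" for h v
  proof -
    have "DLb L h ?p ((v,0) + (0, Wv v)) = DLb L h ?p (v, 0) + DLb L h ?p (0, Wv v)"
      by (rule linear_add[OF linh])
    then show ?thesis by simp
  qed
  have cz: "wd (\<lambda>v. cnj (Dr h \<beta> v)) k = 0" for h by (rule wd_cnj_clinear[OF cl])
  have t2: "wd (\<lambda>v. DLb L h ?p (0, Wv v)) k =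
      (\<Sum>j\<in>UNIV. metric L z (\<rho> z *v u) $ j $ h * (\<Sum>\<gamma>\<in>UNIV. wirt (\<lambda>z'. \<rho> z' $ j $ \<gamma>) z k * u $ \<gamma>))" for h
  proof -
    have "wd (\<lambda>v. DLb L h ?p (0, Wv v)) k = (DLb L h ?p (0, Wv (axis k 1)) - \<i> * DLb L h ?p (0, \<i> *s Wv (axis k 1))) / 2"
      unfolding wd_def axis_i Wcl ..
    also have "\<dots> = (\<Sum>j\<in>UNIV. wd (\<lambda>w. DLb L h ?p (0, w)) j * Wv (axis k 1) $ j)"
      by (rule W1[OF linB])
    also have "\<dots> = (\<Sum>j\<in>UNIV. metric L z (\<rho> z *v u) $ j $ h * (\<Sum>\<gamma>\<in>UNIV. wirt (\<lambda>z'. \<rho> z' $ j $ \<gamma>) z k * u $ \<gamma>))"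
      by (simp add: F2[OF C2 zU] Wv_def wirt_eq[OF dr] wd_clinear[OF cl])
    finally show ?thesis .
  qed
  have "d_z (\<lambda>z' u'. d_ybar (Lc (Lstar \<rho> L)) z' u' \<beta>) z u k =
     wd (\<lambda>v. \<Sum>h\<in>UNIV. cnj (\<rho> z $ h $ \<beta>) * DLb L h ?p (v, Wv v) + cnj (Dr h \<beta> v) * Lb L h ?p) k"
    unfolding d_z_def by (rule wirt_eq[OF dg'])
  also have "\<dots> = (\<Sum>h\<in>UNIV. cnj (\<rho> z $ h $ \<beta>) * (wd (\<lambda>v. DLb L h ?p (v, 0)) k + wd (\<lambda>v. DLb L h ?p (0, Wv v)) k))"
    by (simp only: wd_sum wd_add wd_cmult wd_multc cz split mult_zero_left add_0_right)
  finally show ?thesis by (simp only: F3[OF C2 zU oU] t2)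
qed
lemma inv_props:
  fixes A :: "complex^'n^'n"
  assumes "invertible A"
  shows "A ** matrix_inv A = mat 1" "matrix_inv A ** A = mat 1"
proof -
  have "\<exists>A'. A ** A' = mat 1 \<and> A' ** A = mat 1" using assms unfolding invertible_def by blast
  then have "A ** matrix_inv A = mat 1 \<and> matrix_inv A ** A = mat 1"
    unfolding matrix_inv_def by (rule someI_ex)
  then show "A ** matrix_inv A = mat 1" "matrix_inv A ** A = mat 1" by auto
qed

lemma inv_cramer:
  fixes A :: "complex^'n^'n"
  assumes "invertible A"
  shows "matrix_inv A $ a $ b = det (\<chi> i j. if j = a then axis b 1 $ i else A $ i $ j) / det A"
proof -
  have d0: "det A \<noteq> 0" using assms invertible_det_nz by blast
  have "A *v (matrix_inv A *v axis b 1) = axis b 1"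
    by (simp add: matrix_vector_mul_assoc inv_props[OF assms])
  then have "matrix_inv A *v axis b 1 = (\<chi> k. det (\<chi> i j. if j = k then axis b 1 $ i else A $ i $ j) / det A)"
    using cramer[OF d0] by blast
  then have "(matrix_inv A *v axis b 1) $ a = det (\<chi> i j. if j = a then axis b 1 $ i else A $ i $ j) / det A"
    by simp
  then show ?thesis by (simp add: mv_axis)
qed

lemma F7:
  fixes \<rho> :: "complex^'n \<Rightarrow> complex^'n^'n"
  assumes oU: "open U" and zU: "z \<in> U"
    and holo: "\<And>k \<alpha>. holo_on U (\<lambda>z. \<rho> z $ k $ \<alpha>)"
    and inv: "\<And>z. z \<in> U \<Longrightarrow> invertible (\<rho> z)"
  shows "(\<chi> a b. wirt (\<lambda>z'. matrix_inv (\<rho> z') $ a $ b) z k) ** \<rho> z =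
     - (matrix_inv (\<rho> z) ** (\<chi> i j. wirt (\<lambda>z'. \<rho> z' $ i $ j) z k))"
proof -
  define Dr where "Dr i j = frechet_derivative (\<lambda>z'. \<rho> z' $ i $ j) (at z)" for i j
  have dr: "((\<lambda>z'. \<rho> z' $ i $ j) has_derivative Dr i j) (at z)" for i j
    unfolding Dr_def by (rule holo_der(1)[OF holo zU])
  have cl: "Dr i j (c *s x) = c * Dr i j x" for i j c x
    unfolding Dr_def by (rule holo_der(2)[OF holo zU])
  have rdiff: "(\<lambda>z'. \<rho> z' $ i $ j) differentiable (at z)" for i j
    using dr unfolding differentiable_def by blast
  define Di where "Di a b = frechet_derivative (\<lambda>z'. matrix_inv (\<rho> z') $ a $ b) (at z)" for a b
  have di: "((\<lambda>z'. matrix_inv (\<rho> z') $ a $ b) has_derivative Di a b) (at z)" for a b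
  proof -
    let ?C = "\<lambda>z'. det (\<chi> i j. if j = a then axis b 1 $ i else \<rho> z' $ i $ j) / det (\<rho> z')"
    have ent: "(\<lambda>x. (\<chi> i j. if j = a then axis b 1 $ i else \<rho> x $ i $ j) $ i $ j) differentiable (at z)" for i j
      by (cases "j = a") (simp_all add: rdiff)
    have "?C differentiable (at z)"
      apply (rule differentiable_divide)
        apply (rule differentiable_det[OF ent])
       apply (rule differentiable_det[OF rdiff])
      using inv[OF zU] invertible_det_nz by blast
    then obtain D where D: "(?C has_derivative D) (at z)" unfolding differentiable_def by blast
    have DD: "((\<lambda>z'. matrix_inv (\<rho> z') $ a $ b) has_derivative D) (at z)"
      by (rule has_derivative_transform_within_open[OF D oU zU]) (simp add: inv_cramer[OF inv])
    have "D = Di a b" unfolding Di_def by (rule frechet_derivative_at[OF DD])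
    then show ?thesis using DD by simp
  qed
  have key: "(\<Sum>h\<in>UNIV. wirt (\<lambda>z'. matrix_inv (\<rho> z') $ a $ h) z k * \<rho> z $ h $ g)
      = - (\<Sum>h\<in>UNIV. matrix_inv (\<rho> z) $ a $ h * wirt (\<lambda>z'. \<rho> z' $ h $ g) z k)" for a g
  proof -
    let ?G = "\<lambda>z'. \<Sum>h\<in>UNIV. matrix_inv (\<rho> z') $ a $ h * \<rho> z' $ h $ g"
    let ?DG = "\<lambda>v. \<Sum>h\<in>UNIV. matrix_inv (\<rho> z) $ a $ h * Dr h g v + Di a h v * \<rho> z $ h $ g"
    have d1: "(?G has_derivative ?DG) (at z)"
      apply (rule has_derivative_sum)
      by (rule has_derivative_mult[OF di dr])
    have "((\<lambda>z'. mat 1 $ a $ g :: complex) has_derivative (\<lambda>v. 0)) (at z)" by simp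
    then have d2: "(?G has_derivative (\<lambda>v. 0)) (at z)"
    proof (rule has_derivative_transform_within_open[OF _ oU zU])
      fix x assume "x \<in> U"
      then have "matrix_inv (\<rho> x) ** \<rho> x = mat 1" using inv_props(2)[OF inv] by blast
      moreover have "(matrix_inv (\<rho> x) ** \<rho> x) $ a $ g = ?G x" by (simp add: matrix_matrix_mult_def)
      ultimately show "mat 1 $ a $ g = ?G x" by simp
    qed
    have "?DG = (\<lambda>v. 0)" using has_derivative_unique[OF d1 d2] .
    then have "wd ?DG k = 0" by (simp add: wd_def)
    then have "(\<Sum>h\<in>UNIV. matrix_inv (\<rho> z) $ a $ h * wd (Dr h g) k + wd (Di a h) k * \<rho> z $ h $ g) = 0"
      by (simp only: wd_sum wd_add wd_cmult wd_multc)
    then show ?thesis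
      by (simp add: wirt_eq[OF dr] wirt_eq[OF di] sum.distrib eq_neg_iff_add_eq_0 add.commute)
  qed
  show ?thesis
    by (simp add: vec_eq_iff matrix_matrix_mult_def key)
qed
definition cmat :: "complex^'n^'m \<Rightarrow> complex^'n^'m" where
  "cmat A = (\<chi> i j. cnj (A $ i $ j))"

lemma cmat_mult: "cmat ((A::complex^'n^'n) ** B) = cmat A ** cmat B"
  by (simp add: cmat_def vec_eq_iff matrix_matrix_mult_def)

lemma cmat_one: "cmat (mat 1 :: complex^'n^'n) = mat 1"
  by (simp add: cmat_def vec_eq_iff mat_def)

lemma invertible_cmat:
  fixes A :: "complex^'n^'n"
  assumes "invertible A" shows "invertible (cmat A)"
  unfolding invertible_def
  using inv_props[OF assms] cmat_mult[of A "matrix_inv A"] cmat_mult[of "matrix_inv A" A] cmat_one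
  by metis

lemma invertible_transpose':
  fixes A :: "complex^'n^'n"
  assumes "invertible A" shows "invertible (transpose A)"
proof -
  have "transpose A ** transpose (matrix_inv A) = mat 1"
    using inv_props(2)[OF assms] by (metis matrix_transpose_mul transpose_mat)
  moreover have "transpose (matrix_inv A) ** transpose A = mat 1"
    using inv_props(1)[OF assms] by (metis matrix_transpose_mul transpose_mat)
  ultimately show ?thesis unfolding invertible_def by blast
qed

lemma left_right_unique:
  fixes T A S :: "complex^'n^'n"
  assumes "T ** A = mat 1" "A ** S = mat 1"
  shows "T = S"
proof -
  have "T = T ** (A ** S)" using assms(2) by simp
  also have "\<dots> = (T ** A) ** S" by (simp add: matrix_mul_assoc)
  finally show ?thesis using assms(1) by simp
qed
theorem proposition3p1:
  fixes U :: "(complex^'n) set"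
    and \<rho> :: "complex^'n \<Rightarrow> complex^'n^'n"
    and L :: "complex^'n \<Rightarrow> complex^'n \<Rightarrow> real"
  assumes U_open: "open U"
    and \<rho>_holo: "\<And>k \<alpha>. holo_on U (\<lambda>z. \<rho> z $ k $ \<alpha>)"
    and \<rho>_inv: "\<And>z. z \<in> U \<Longrightarrow> invertible (\<rho> z)"
    and L_C2: "C2_on (U \<times> UNIV) (\<lambda>p. L (fst p) (snd p))"
    and g_nondeg: "\<And>z \<eta>. z \<in> U \<Longrightarrow> invertible (metric L z \<eta>)"
    and z_in: "z \<in> U"
  shows "induced_conn \<rho> L z u \<alpha> k =
           (\<Sum>\<beta>\<in>UNIV. metric_inv (Lstar \<rho> L) z u $ \<beta> $ \<alpha>
                      * d_z (\<lambda>z' u'. d_ybar (Lc (Lstar \<rho> L)) z' u' \<beta>) z u k)"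
proof -
  define R where "R = \<rho> z"
  define Ri where "Ri = matrix_inv R"
  define \<eta> where "\<eta> = R *v u"
  define G where "G = metric L z \<eta>"
  define Gi where "Gi = matrix_inv G"
  define Rc where "Rc = cmat R"
  define d\<rho> where "d\<rho> = (\<chi> i j. wirt (\<lambda>z'. \<rho> z' $ i $ j) z k)"
  define Winv where "Winv = (\<chi> a b. wirt (\<lambda>z'. matrix_inv (\<rho> z') $ a $ b) z k)"
  define Gs where "Gs = metric (Lstar \<rho> L) z u"
  define M where "M = matrix_inv Gs"
  define Q where "Q = (\<chi> h. d_z (\<lambda>z' y'. d_ybar (Lc L) z' y' h) z \<eta> k)"
  define wv where "wv = d\<rho> *v u"
  define X where "X = Q + wv v* G"
  define CLv where "CLv = (\<chi> h. CL_conn L z \<eta> h k)"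
  have invR: "invertible R" unfolding R_def by (rule \<rho>_inv[OF z_in])
  have invG: "invertible G" unfolding G_def by (rule g_nondeg[OF z_in])
  have Gs_eq: "Gs = transpose R ** G ** Rc"
    unfolding Gs_def G_def \<eta>_def R_def Rc_def cmat_def
    by (simp add: vec_eq_iff F5[OF L_C2 z_in] matrix_matrix_mult_def transpose_def
        sum_distrib_left sum_distrib_right mult_ac)
  have invGs: "invertible Gs"
    unfolding Gs_eq Rc_def
    by (intro invertible_mult invertible_transpose' invertible_cmat invR invG)
  have CLv_eq: "CLv = Q v* Gi"
    by (simp add: CLv_def Q_def Gi_def CL_conn_def metric_inv_def G_def vec_eq_iff vector_matrix_mult_def mult.commute)
  have F6': "d_z (\<lambda>z' u'. d_ybar (Lc (Lstar \<rho> L)) z' u' \<beta>) z u k = (\<Sum>h\<in>UNIV. Rc $ h $ \<beta> * X $ h)" for \<beta>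
    unfolding F6[OF L_C2 U_open z_in \<rho>_holo]
    by (simp add: Rc_def cmat_def R_def X_def Q_def wv_def \<eta>_def G_def d\<rho>_def vector_matrix_mult_def
        matrix_vector_mult_def mult.commute)
  have rhs1: "(\<Sum>\<beta>\<in>UNIV. M $ \<beta> $ \<alpha> * (\<Sum>h\<in>UNIV. Rc $ h $ \<beta> * X $ h)) = (transpose (Rc ** M) *v X) $ \<alpha>"
  proof -
    have "(transpose (Rc ** M) *v X) $ \<alpha> = (\<Sum>h\<in>UNIV. (\<Sum>\<beta>\<in>UNIV. Rc$h$\<beta> * M$\<beta>$\<alpha>) * X$h)"
      by (simp add: matrix_vector_mult_def transpose_def matrix_matrix_mult_def)
    also have "\<dots> = (\<Sum>h\<in>UNIV. \<Sum>\<beta>\<in>UNIV. M$\<beta>$\<alpha> * (Rc$h$\<beta> * X$h))"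
      unfolding sum_distrib_right by (intro sum.cong refl) (simp add: mult_ac)
    also have "\<dots> = (\<Sum>\<beta>\<in>UNIV. \<Sum>h\<in>UNIV. M$\<beta>$\<alpha> * (Rc$h$\<beta> * X$h))"
      by (rule sum.swap)
    also have "\<dots> = (\<Sum>\<beta>\<in>UNIV. M $ \<beta> $ \<alpha> * (\<Sum>h\<in>UNIV. Rc $ h $ \<beta> * X $ h))"
      by (simp only: sum_distrib_left)
    finally show ?thesis by simp
  qed
  have T_eq: "transpose (Rc ** M) = Ri ** transpose Gi"
  proof (rule left_right_unique)
    have "Gs ** M = mat 1" unfolding M_def by (rule inv_props(1)[OF invGs])
    then have "transpose R ** G ** (Rc ** M) = mat 1" unfolding Gs_eq by (simp add: matrix_mul_assoc)
    then have "transpose (transpose R ** G ** (Rc ** M)) = mat 1" by simp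
    then show "transpose (Rc ** M) ** (transpose G ** R) = mat 1"
      by (simp add: matrix_transpose_mul matrix_mul_assoc)
    have "(transpose G ** R) ** (Ri ** transpose Gi) = transpose G ** (R ** Ri) ** transpose Gi"
      by (simp add: matrix_mul_assoc)
    also have "\<dots> = transpose (Gi ** G)"
      by (simp add: Ri_def inv_props(1)[OF invR] matrix_transpose_mul)
    also have "\<dots> = mat 1" by (simp add: Gi_def inv_props(2)[OF invG])
    finally show "(transpose G ** R) ** (Ri ** transpose Gi) = mat 1" .
  qed
  have X2: "X v* Gi = CLv + wv"
  proof -
    have "X v* Gi = Q v* Gi + (wv v* G) v* Gi" by (simp add: X_def vector_matrix_left_distrib)
    also have "\<dots> = CLv + wv" by (simp add: vector_matrix_mul_assoc Gi_def inv_props(1)[OF invG] CLv_eq)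
    finally show ?thesis .
  qed
  have rhs: "(\<Sum>\<beta>\<in>UNIV. metric_inv (Lstar \<rho> L) z u $ \<beta> $ \<alpha>
                      * d_z (\<lambda>z' u'. d_ybar (Lc (Lstar \<rho> L)) z' u' \<beta>) z u k) = (Ri *v (CLv + wv)) $ \<alpha>"
  proof -
    have "(\<Sum>\<beta>\<in>UNIV. metric_inv (Lstar \<rho> L) z u $ \<beta> $ \<alpha>
                      * d_z (\<lambda>z' u'. d_ybar (Lc (Lstar \<rho> L)) z' u' \<beta>) z u k)
        = (\<Sum>\<beta>\<in>UNIV. M $ \<beta> $ \<alpha> * (\<Sum>h\<in>UNIV. Rc $ h $ \<beta> * X $ h))"
      unfolding F6' M_def Gs_def metric_inv_def ..
    also have "\<dots> = ((Ri ** transpose Gi) *v X) $ \<alpha>" unfolding rhs1 T_eq ..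
    also have "\<dots> = (Ri *v (CLv + wv)) $ \<alpha>" by (simp add: matrix_vector_mul_assoc[symmetric] X2)
    finally show ?thesis .
  qed
  have W7: "Winv ** R = - (Ri ** d\<rho>)"
    unfolding Winv_def R_def Ri_def d\<rho>_def by (rule F7[OF U_open z_in \<rho>_holo \<rho>_inv])
  have lhs: "induced_conn \<rho> L z u \<alpha> k = (Ri *v CLv) $ \<alpha> - (Winv *v \<eta>) $ \<alpha>"
    by (simp add: induced_conn_def Let_def R_def Ri_def \<eta>_def CLv_def Winv_def matrix_vector_mult_def)
  have "Winv *v \<eta> = - (Ri *v wv)"
    unfolding \<eta>_def wv_def matrix_vector_mul_assoc W7 by (simp add: matrix_vector_mul_assoc vec_eq_iff matrix_vector_mult_def sum_negf)
  then show ?thesis unfolding lhs rhs by (simp add: matrix_vector_right_distrib)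
qed
end
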